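(* Let $m\ge4$ and let $p=(p_1,\dots,p_m)$, $q=(q_1,\dots,q_m)$ be ordered $m$-tuples of distinct points of $\partial\mathbf H^n_{\mathbb H}$, with invariants computed using lifts whose Gram matrices are semi-normalized. If the $(d+1)$-tuples $F(p)=(u_0,\mathbb X_1,\dots,\mathbb X_d)$ and $F(q)$, $d=\frac{m(m-3)}{2}$, are $\mathrm{Sp}(1)$-congruent and $\mathbb A_{23}(p)=\mathbb A_{23}(q)$, then $p$ and $q$ are $\mathrm{PSp}(n,1)$-congruent. That is, the $\mathrm{Sp}(1)$-congruence class of $F$ and $\mathbb A_{23}$ determine the $\mathrm{PSp}(n,1)$-congruence class of $p$.
   Context: $\mathbb H^{n,1}$ is the right quaternionic vector space $\mathbb H^{n+1}$ with Hermitian form $\langle\mathbf z,\mathbf w\rangle=\bar w_{n+1}z_1+\bar w_2z_2+\cdots+\bar w_nz_n+\bar w_1z_{n+1}$; $\partial\mathbf H^n_{\mathbb H}$ is the set of quaternionic lines of nonzero null vectors; $\mathrm{PSp}(n,1)=\mathrm{Sp}(n,1)/\{\pm I\}$ where $\mathrm{Sp}(n,1)$ preserves the form. For a lift $(\mathbf p_1,\dots,\mathbf p_m)$ the Gram matrix is $g_{kj}=\langle\mathbf p_j,\mathbf p_k\rangle$; it is semi-normalized if $g_{1j}=1$ for $2\le j\le m$ and $|g_{23}|=1$ (diagonal entries are $0$). Cross ratio $\mathbb X(z_1,z_2,z_3,z_4)=\langle\mathbf z_3,\mathbf z_1\rangle\langle\mathbf z_3,\mathbf z_2\rangle^{-1}\langle\mathbf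 z_4,\mathbf z_2\rangle\langle\mathbf z_4,\mathbf z_1\rangle^{-1}$; $\mathbb X_1,\dots,\mathbb X_d$ list in a fixed order $\mathbb X(\mathbf p_1,\mathbf p_2,\mathbf p_3,\mathbf p_j)$, $\mathbb X(\mathbf p_1,\mathbf p_3,\mathbf p_2,\mathbf p_j)$ ($4\le j\le m$) and $\mathbb X(\mathbf p_1,\mathbf p_k,\mathbf p_2,\mathbf p_j)$ ($4\le k<j\le m$). $\mathbb A_{23}=\arccos\frac{\Re(-\langle\mathbf p_1,\mathbf p_2,\mathbf p_3\rangle)}{|\langle\mathbf p_1,\mathbf p_2,\mathbf p_3\rangle|}$ with $\langle\mathbf z_1,\mathbf z_2,\mathbf z_3\rangle=\langle\mathbf z_1,\mathbf z_2\rangle\langle\mathbf z_2,\mathbf z_3\rangle\langle\mathbf z_3,\mathbf z_1\rangle$. $u_0=\Im(g_{23})/|\Im(g_{23})|$ if $\mathbb A_{23}\ne0$, else $u_0=0$. Tuples $F,F'$ are $\mathrm{Sp}(1)$-congruent if $F'=\mu F\bar\mu$ componentwise for some unit quaternion $\mu$. *)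

theory Defs
  imports Complex_Main
begin

datatype quat = Quat (qre: real) (qi: real) (qj: real) (qk: real)

instantiation quat :: ab_group_add
begin
definition "0 = Quat 0 0 0 0"
definition "x + y = Quat (qre x + qre y) (qi x + qi y) (qj x + qj y) (qk x + qk y)"
definition "- x = Quat (- qre x) (- qi x) (- qj x) (- qk x)"
definition "x - y = Quat (qre x - qre y) (qi x - qi y) (qj x - qj y) (qk x - qk y)"
instance
  by standard (simp_all add: zero_quat_def plus_quat_def uminus_quat_def minus_quat_def
      quat.expand)
end

instantiation quat :: "{one, times, inverse}"
begin
definition "1 = Quat 1 0 0 0"
definition "x * y = Quat
   (qre x * qre y - qi x * qi y - qj x * qj y - qk x * qk y)
   (qre x * qi y + qi x * qre y + qj x * qk y - qk x * qj y)
   (qre x * qj y - qi x * qk y + qj x * qre y + qk x * qi y)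
   (qre x * qk y + qi x * qj y - qj x * qi y + qk x * qre y)"
definition "inverse x = (let s = (qre x)\<^sup>2 + (qi x)\<^sup>2 + (qj x)\<^sup>2 + (qk x)\<^sup>2 in
   Quat (qre x / s) (- qi x / s) (- qj x / s) (- qk x / s))"
definition "x div y = x * inverse (y :: quat)"
instance ..
end

definition qcnj :: "quat \<Rightarrow> quat" where
  "qcnj x = Quat (qre x) (- qi x) (- qj x) (- qk x)"

definition qabs :: "quat \<Rightarrow> real" where
  "qabs x = sqrt ((qre x)\<^sup>2 + (qi x)\<^sup>2 + (qj x)\<^sup>2 + (qk x)\<^sup>2)"

definition qim :: "quat \<Rightarrow> quat" where
  "qim x = Quat 0 (qi x) (qj x) (qk x)"

definition qscale :: "real \<Rightarrow> quat \<Rightarrow> quat" where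
  "qscale r x = Quat (r * qre x) (r * qi x) (r * qj x) (r * qk x)"

text \<open>Vectors of the right H-module H^{n+1}: functions on indices 1..n+1, zero elsewhere.\<close>
type_synonym qvec = "nat \<Rightarrow> quat"

definition qvecs :: "nat \<Rightarrow> qvec set" where
  "qvecs n = {z. \<forall>i. i \<notin> {1..n+1} \<longrightarrow> z i = 0}"

definition hform :: "nat \<Rightarrow> qvec \<Rightarrow> qvec \<Rightarrow> quat" where
  "hform n z w = qcnj (w (n+1)) * z 1 + (\<Sum>i\<in>{2..n}. qcnj (w i) * z i) + qcnj (w 1) * z (n+1)"

definition qline :: "qvec \<Rightarrow> qvec set" where
  "qline z = {(\<lambda>i. z i * c) | c. c \<noteq> 0}"

definition bdry :: "nat \<Rightarrow> qvec set set" where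
  "bdry n = {qline z | z. z \<in> qvecs n \<and> z \<noteq> (\<lambda>i. 0) \<and> hform n z z = 0}"

definition mv :: "nat \<Rightarrow> (nat \<Rightarrow> nat \<Rightarrow> quat) \<Rightarrow> qvec \<Rightarrow> qvec" where
  "mv n A z = (\<lambda>i. if i \<in> {1..n+1} then \<Sum>j\<in>{1..n+1}. A i j * z j else 0)"

definition Sp_n1 :: "nat \<Rightarrow> (nat \<Rightarrow> nat \<Rightarrow> quat) set" where
  "Sp_n1 n = {A. bij_betw (mv n A) (qvecs n) (qvecs n) \<and>
     (\<forall>z\<in>qvecs n. \<forall>w\<in>qvecs n. hform n (mv n A z) (mv n A w) = hform n z w)}"

text \<open>PSp(n,1)-congruence of ordered m-tuples of boundary points (the action of
  A in Sp(n,1) on a point is the image of the line; -I acts trivially).\<close>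
definition PSp_congruent :: "nat \<Rightarrow> nat \<Rightarrow> (nat \<Rightarrow> qvec set) \<Rightarrow> (nat \<Rightarrow> qvec set) \<Rightarrow> bool" where
  "PSp_congruent n m p q \<longleftrightarrow> (\<exists>A\<in>Sp_n1 n. \<forall>i\<in>{1..m}. mv n A ` p i = q i)"

definition is_lift :: "nat \<Rightarrow> (nat \<Rightarrow> qvec set) \<Rightarrow> (nat \<Rightarrow> qvec) \<Rightarrow> bool" where
  "is_lift m p P \<longleftrightarrow> (\<forall>i\<in>{1..m}. P i \<in> p i)"

definition gram :: "nat \<Rightarrow> (nat \<Rightarrow> qvec) \<Rightarrow> nat \<Rightarrow> nat \<Rightarrow> quat" where
  "gram n P k j = hform n (P j) (P k)"

definition semi_normalized :: "nat \<Rightarrow> nat \<Rightarrow> (nat \<Rightarrow> qvec) \<Rightarrow> bool" where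
  "semi_normalized n m P \<longleftrightarrow> (\<forall>j\<in>{2..m}. gram n P 1 j = 1) \<and> qabs (gram n P 2 3) = 1"

definition cross_ratio :: "nat \<Rightarrow> qvec \<Rightarrow> qvec \<Rightarrow> qvec \<Rightarrow> qvec \<Rightarrow> quat" where
  "cross_ratio n z1 z2 z3 z4 =
     hform n z3 z1 * inverse (hform n z3 z2) * hform n z4 z2 * inverse (hform n z4 z1)"

definition cross_ratios :: "nat \<Rightarrow> nat \<Rightarrow> (nat \<Rightarrow> qvec) \<Rightarrow> quat list" where
  "cross_ratios n m P =
     map (\<lambda>j. cross_ratio n (P 1) (P 2) (P 3) (P j)) [4..<m+1] @
     map (\<lambda>j. cross_ratio n (P 1) (P 3) (P 2) (P j)) [4..<m+1] @
     concat (map (\<lambda>k. map (\<lambda>j. cross_ratio n (P 1) (P k) (P 2) (P j)) [k+1..<m+1]) [4..<m+1])"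

definition herm_triple :: "nat \<Rightarrow> qvec \<Rightarrow> qvec \<Rightarrow> qvec \<Rightarrow> quat" where
  "herm_triple n z1 z2 z3 = hform n z1 z2 * hform n z2 z3 * hform n z3 z1"

definition A23 :: "nat \<Rightarrow> (nat \<Rightarrow> qvec) \<Rightarrow> real" where
  "A23 n P = arccos (qre (- herm_triple n (P 1) (P 2) (P 3)) / qabs (herm_triple n (P 1) (P 2) (P 3)))"

definition u0 :: "nat \<Rightarrow> (nat \<Rightarrow> qvec) \<Rightarrow> quat" where
  "u0 n P = (if A23 n P \<noteq> 0
     then qscale (1 / qabs (qim (gram n P 2 3))) (qim (gram n P 2 3)) else 0)"

definition Finv :: "nat \<Rightarrow> nat \<Rightarrow> (nat \<Rightarrow> qvec) \<Rightarrow> quat list" where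
  "Finv n m P = u0 n P # cross_ratios n m P"

definition Sp1_congruent :: "quat list \<Rightarrow> quat list \<Rightarrow> bool" where
  "Sp1_congruent F F' \<longleftrightarrow> (\<exists>\<mu>. qabs \<mu> = 1 \<and> F' = map (\<lambda>x. \<mu> * x * qcnj \<mu>) F)"

end

theory Submission
  imports Defs
begin
lemma quat_eqI: "qre x = qre y \<Longrightarrow> qi x = qi y \<Longrightarrow> qj x = qj y \<Longrightarrow> qk x = qk y \<Longrightarrow> x = y"
  by (simp add: quat.expand)

lemma quat_sel_simps [simp]:
  "qre 0 = 0" "qi 0 = 0" "qj 0 = 0" "qk 0 = 0"
  "qre 1 = 1" "qi 1 = 0" "qj 1 = 0" "qk 1 = 0"
  "qre (x + y) = qre x + qre y" "qi (x + y) = qi x + qi y" "qj (x + y) = qj x + qj y" "qk (x + y) = qk x + qk y"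
  "qre (x - y) = qre x - qre y" "qi (x - y) = qi x - qi y" "qj (x - y) = qj x - qj y" "qk (x - y) = qk x - qk y"
  "qre (- x) = - qre x" "qi (- x) = - qi x" "qj (- x) = - qj x" "qk (- x) = - qk x"
  "qre (x * y) = qre x * qre y - qi x * qi y - qj x * qj y - qk x * qk y"
  "qi (x * y) = qre x * qi y + qi x * qre y + qj x * qk y - qk x * qj y"
  "qj (x * y) = qre x * qj y - qi x * qk y + qj x * qre y + qk x * qi y"
  "qk (x * y) = qre x * qk y + qi x * qj y - qj x * qi y + qk x * qre y"
  by (simp_all add: zero_quat_def one_quat_def plus_quat_def minus_quat_def uminus_quat_def times_quat_def)

instance quat :: division_ring
proof
  fix a b c :: quat
  show "a * b * c = a * (b * c)" by (rule quat_eqI) (simp_all add: algebra_simps)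
  show "1 * a = a" by (rule quat_eqI) simp_all
  show "a * 1 = a" by (rule quat_eqI) simp_all
  show "(a + b) * c = a * c + b * c" by (rule quat_eqI) (simp_all add: algebra_simps)
  show "a * (b + c) = a * b + a * c" by (rule quat_eqI) (simp_all add: algebra_simps)
  show "(0::quat) \<noteq> 1" by (metis quat_sel_simps(1,5) zero_neq_one)
  show "a / b = a * inverse b" by (simp add: divide_quat_def)
  show "inverse (0::quat) = 0" by (simp add: inverse_quat_def zero_quat_def)
next
  fix a :: quat assume "a \<noteq> 0"
  then have s: "(qre a)\<^sup>2 + (qi a)\<^sup>2 + (qj a)\<^sup>2 + (qk a)\<^sup>2 \<noteq> 0"
    by (metis (no_types, lifting) add_nonneg_eq_0_iff quat_eqI quat_sel_simps(1-4) zero_le_power2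
        power_eq_0_iff add_nonneg_nonneg)
  define t where "t = (qre a)\<^sup>2 + (qi a)\<^sup>2 + (qj a)\<^sup>2 + (qk a)\<^sup>2"
  have tn: "t \<noteq> 0" using s t_def by simp
  have inv: "inverse a = Quat (qre a / t) (- qi a / t) (- qj a / t) (- qk a / t)"
    by (simp add: inverse_quat_def t_def Let_def)
  show "inverse a * a = 1"
    by (rule quat_eqI) (simp_all add: inv, simp_all add: field_simps tn, simp_all add: t_def power2_eq_square algebra_simps)
  show "a * inverse a = 1"
    by (rule quat_eqI) (simp_all add: inv, simp_all add: field_simps tn, simp_all add: t_def power2_eq_square algebra_simps)
qed

definition qr :: "real \<Rightarrow> quat" where "qr r = Quat r 0 0 0"

lemma qr_sel [simp]: "qre (qr r) = r" "qi (qr r) = 0" "qj (qr r) = 0" "qk (qr r) = 0"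
  by (simp_all add: qr_def)

lemma qcnj_sel [simp]: "qre (qcnj x) = qre x" "qi (qcnj x) = - qi x" "qj (qcnj x) = - qj x" "qk (qcnj x) = - qk x"
  by (simp_all add: qcnj_def)

lemma qr_comm: "qr r * x = x * qr r"
  by (rule quat_eqI) simp_all

lemma qr_0 [simp]: "qr 0 = 0" and qr_1 [simp]: "qr 1 = 1"
  by (rule quat_eqI, simp_all)+

lemma qcnj_mult: "qcnj (x * y) = qcnj y * qcnj x"
  by (rule quat_eqI) (simp_all add: algebra_simps)
lemma qcnj_add [simp]: "qcnj (x + y) = qcnj x + qcnj y"
  by (rule quat_eqI) simp_all
lemma qcnj_diff [simp]: "qcnj (x - y) = qcnj x - qcnj y"
  by (rule quat_eqI) simp_all
lemma qcnj_minus [simp]: "qcnj (- x) = - qcnj x"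
  by (rule quat_eqI) simp_all
lemma qcnj_qcnj [simp]: "qcnj (qcnj x) = x"
  by (rule quat_eqI) simp_all
lemma qcnj_0 [simp]: "qcnj 0 = 0" and qcnj_1 [simp]: "qcnj 1 = 1"
  by (rule quat_eqI, simp_all)+
lemma qcnj_qr [simp]: "qcnj (qr r) = qr r"
  by (rule quat_eqI) simp_all
lemma qcnj_eq_0_iff [simp]: "qcnj x = 0 \<longleftrightarrow> x = 0"
  by (metis qcnj_0 qcnj_qcnj)
lemma qcnj_sum: "qcnj (sum f A) = (\<Sum>i\<in>A. qcnj (f i))"
  by (induction A rule: infinite_finite_induct) simp_all

definition qn2 :: "quat \<Rightarrow> real" where
  "qn2 x = (qre x)\<^sup>2 + (qi x)\<^sup>2 + (qj x)\<^sup>2 + (qk x)\<^sup>2"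

lemma qn2_nonneg: "qn2 x \<ge> 0" by (simp add: qn2_def)

lemma qn2_eq_0: "qn2 x = 0 \<longleftrightarrow> x = 0"
proof
  assume "qn2 x = 0" then show "x = 0"
    unfolding qn2_def by (intro quat_eqI) (simp_all add: add_nonneg_eq_0_iff)
qed (simp add: qn2_def)

lemma mult_cnj: "x * qcnj x = qr (qn2 x)" "qcnj x * x = qr (qn2 x)"
  by (rule quat_eqI, simp_all add: qn2_def power2_eq_square algebra_simps)+

lemma add_cnj: "x + qcnj x = qr (2 * qre x)" "qcnj x + x = qr (2 * qre x)"
  by (rule quat_eqI, simp_all)+

lemma qre_comm: "qre (x * y) = qre (y * x)" by (simp add: algebra_simps)

lemma qcnj_inverse: "qcnj (inverse x) = inverse (qcnj x)"
proof (cases "x = 0")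
  case False
  have "qcnj (inverse x) * qcnj x = qcnj (x * inverse x)" by (simp only: qcnj_mult)
  also have "\<dots> = 1" using False by simp
  finally have e: "qcnj (inverse x) * qcnj x = 1" .
  have "qcnj (inverse x) = qcnj (inverse x) * (qcnj x * inverse (qcnj x))" using False by simp
  also have "\<dots> = inverse (qcnj x)" by (simp only: mult.assoc[symmetric] e mult_1_left)
  finally show ?thesis .
qed simp

lemma unit_cnj: "qabs \<mu> = 1 \<Longrightarrow> \<mu> * qcnj \<mu> = 1 \<and> qcnj \<mu> * \<mu> = 1"
proof -
  assume "qabs \<mu> = 1"
  then have "qn2 \<mu> = 1" unfolding qabs_def qn2_def by simp
  then show ?thesis by (simp add: mult_cnj)
qed

lemma qre_qr_eq: "qi x = 0 \<Longrightarrow> qj x = 0 \<Longrightarrow> qk x = 0 \<Longrightarrow> x = qr (qre x)"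
  by (rule quat_eqI) simp_all

lemma hform_add_left: "hform n (\<lambda>i. z i + w i) u = hform n z u + hform n w u"
  unfolding hform_def by (simp add: distrib_left sum.distrib algebra_simps)

lemma hform_diff_left: "hform n (\<lambda>i. z i - w i) u = hform n z u - hform n w u"
  unfolding hform_def by (simp add: right_diff_distrib sum_subtractf algebra_simps)

lemma hform_scale_left: "hform n (\<lambda>i. z i * c) w = hform n z w * c"
  unfolding hform_def by (simp add: distrib_right sum_distrib_right mult.assoc)

lemma hform_zero_left [simp]: "hform n (\<lambda>i. 0) w = 0"
  unfolding hform_def by simp

lemma hform_conj: "hform n w z = qcnj (hform n z w)"
  unfolding hform_def by (simp add: qcnj_mult qcnj_sum algebra_simps)

lemma hform_add_right: "hform n u (\<lambda>i. z i + w i) = hform n u z + hform n u w"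
  by (subst hform_conj, simp add: hform_add_left) (metis hform_conj)

lemma hform_diff_right: "hform n u (\<lambda>i. z i - w i) = hform n u z - hform n u w"
  by (subst hform_conj, simp add: hform_diff_left) (metis hform_conj)

lemma hform_scale_right: "hform n z (\<lambda>i. w i * c) = qcnj c * hform n z w"
  by (subst hform_conj, simp add: hform_scale_left qcnj_mult) (metis hform_conj)

lemma hform_self_real: "hform n z z = qr (qre (hform n z z))"
proof -
  have "qcnj (hform n z z) = hform n z z" by (metis hform_conj)
  then have "qi (hform n z z) = 0" "qj (hform n z z) = 0" "qk (hform n z z) = 0"
    by (metis add.inverse_unique add_eq_0_iff2 qcnj_sel neg_equal_zero)+
  then show ?thesis by (rule qre_qr_eq)
qed

definition mmul :: "nat \<Rightarrow> (nat \<Rightarrow> nat \<Rightarrow> quat) \<Rightarrow> (nat \<Rightarrow> nat \<Rightarrow> quat) \<Rightarrow> nat \<Rightarrow> nat \<Rightarrow> quat" where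
  "mmul n A B = (\<lambda>i j. \<Sum>k\<in>{1..n+1}. A i k * B k j)"

lemma mv_qvecs [simp]: "mv n A z \<in> qvecs n"
  by (simp add: mv_def qvecs_def)

lemma mv_mmul: "mv n (mmul n A B) z = mv n A (mv n B z)"
proof
  fix i
  show "mv n (mmul n A B) z i = mv n A (mv n B z) i"
  proof (cases "i \<in> {1..n+1}")
    case True
    have "mv n A (mv n B z) i = (\<Sum>j\<in>{1..n+1}. A i j * (\<Sum>k\<in>{1..n+1}. B j k * z k))"
      using True by (simp add: mv_def)
    also have "\<dots> = (\<Sum>j\<in>{1..n+1}. \<Sum>k\<in>{1..n+1}. A i j * B j k * z k)"
      by (simp only: sum_distrib_left mult.assoc)
    also have "\<dots> = (\<Sum>k\<in>{1..n+1}. \<Sum>j\<in>{1..n+1}. A i j * B j k * z k)"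
      by (rule sum.swap)
    also have "\<dots> = mv n (mmul n A B) z i"
      using True by (simp only: mv_def mmul_def sum_distrib_right if_True)
    finally show ?thesis by simp
  next
    case False
    then show ?thesis unfolding mv_def by (simp only: if_not_P[OF False] if_False)
  qed
qed

lemma Sp_mmul: "A \<in> Sp_n1 n \<Longrightarrow> B \<in> Sp_n1 n \<Longrightarrow> mmul n A B \<in> Sp_n1 n"
proof -
  assume a: "A \<in> Sp_n1 n" and b: "B \<in> Sp_n1 n"
  have "bij_betw (mv n A \<circ> mv n B) (qvecs n) (qvecs n)"
    using a b unfolding Sp_n1_def by (auto intro: bij_betw_trans)
  moreover have "mv n A \<circ> mv n B = mv n (mmul n A B)" by (simp add: fun_eq_iff mv_mmul)
  moreover have "\<forall>z\<in>qvecs n. \<forall>w\<in>qvecs n. hform n (mv n (mmul n A B) z) (mv n (mmul n A B) w) = hform n z w"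
  proof (intro ballI)
    fix z w assume "z \<in> qvecs n" "w \<in> qvecs n"
    have "hform n (mv n A (mv n B z)) (mv n A (mv n B w)) = hform n (mv n B z) (mv n B w)"
      using a unfolding Sp_n1_def by simp
    also have "\<dots> = hform n z w" using b \<open>z \<in> qvecs n\<close> \<open>w \<in> qvecs n\<close> unfolding Sp_n1_def by simp
    finally show "hform n (mv n (mmul n A B) z) (mv n (mmul n A B) w) = hform n z w" by (simp add: mv_mmul)
  qed
  ultimately show ?thesis unfolding Sp_n1_def by simp
qed

definition idm :: "nat \<Rightarrow> nat \<Rightarrow> quat" where "idm = (\<lambda>i j. if i = j then 1 else 0)"

lemma mv_idm: assumes "z \<in> qvecs n" shows "mv n idm z = z"
proof
  fix i
  have e: "\<And>j. (if i = j then 1 else 0) * z j = (if i = j then z j else 0)" by simp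
  show "mv n idm z i = z i"
    using assms by (simp add: mv_def idm_def e qvecs_def del: sum.cl_ivl_Suc)
qed

lemma Sp_idm: "idm \<in> Sp_n1 n"
proof -
  have "bij_betw (mv n idm) (qvecs n) (qvecs n)"
    by (rule bij_betw_byWitness[where f'="mv n idm"]) (auto simp: mv_idm)
  then show ?thesis unfolding Sp_n1_def by (simp add: mv_idm)
qed

definition sw :: "nat \<Rightarrow> nat \<Rightarrow> nat" where
  "sw n j = (if j = 1 then n+1 else if j = n+1 then 1 else j)"

definition tmat :: "nat \<Rightarrow> qvec \<Rightarrow> quat \<Rightarrow> nat \<Rightarrow> nat \<Rightarrow> quat" where
  "tmat n d \<alpha> = (\<lambda>i j. (if i = j then 1 else 0) + d i * \<alpha> * qcnj (d (sw n j)))"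

definition tvec :: "nat \<Rightarrow> qvec \<Rightarrow> quat \<Rightarrow> qvec \<Rightarrow> qvec" where
  "tvec n d \<alpha> z = (\<lambda>i. z i + d i * (\<alpha> * hform n z d))"

lemma sum_sw: assumes "n \<ge> 1"
  shows "(\<Sum>j\<in>{1..n+1}. qcnj (d (sw n j)) * z j) = hform n z d"
proof -
  have I: "{1..n+1} = insert 1 (insert (n+1) {2..n})" using assms by auto
  have s: "(\<Sum>j\<in>{2..n}. qcnj (d (sw n j)) * z j) = (\<Sum>j\<in>{2..n}. qcnj (d j) * z j)"
    by (rule sum.cong) (auto simp: sw_def)
  show ?thesis using assms unfolding I hform_def
    by (simp add: s sw_def algebra_simps)
qed

lemma mv_tmat: assumes "n \<ge> 1" "d \<in> qvecs n" "z \<in> qvecs n"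
  shows "mv n (tmat n d \<alpha>) z = tvec n d \<alpha> z"
proof
  fix i
  show "mv n (tmat n d \<alpha>) z i = tvec n d \<alpha> z i"
  proof (cases "i \<in> {1..n+1}")
    case True
    have e: "\<And>j. (if i = j then 1 else 0) * z j = (if i = j then z j else 0)" by simp
    have "mv n (tmat n d \<alpha>) z i = (\<Sum>j\<in>{1..n+1}. (if i = j then z j else 0) + d i * \<alpha> * (qcnj (d (sw n j)) * z j))"
      using True by (simp add: mv_def tmat_def distrib_right mult.assoc e del: sum.cl_ivl_Suc)
    also have "\<dots> = z i + d i * \<alpha> * (\<Sum>j\<in>{1..n+1}. qcnj (d (sw n j)) * z j)"
      using True by (simp add: sum.distrib sum_distrib_left del: sum.cl_ivl_Suc)
    also have "\<dots> = tvec n d \<alpha> z i" using assms by (simp only: sum_sw[OF assms(1)] tvec_def mult.assoc)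
    finally show ?thesis .
  next
    case False
    have "mv n (tmat n d \<alpha>) z i = 0" unfolding mv_def by (simp only: if_not_P[OF False] if_False)
    moreover have "tvec n d \<alpha> z i = 0" using False assms(2,3) unfolding tvec_def qvecs_def by simp
    ultimately show ?thesis by simp
  qed
qed

lemma tvec_form:
  assumes C: "\<alpha> + qcnj \<alpha> + qcnj \<alpha> * hform n d d * \<alpha> = 0"
  shows "hform n (tvec n d \<alpha> z) (tvec n d \<alpha> w) = hform n z w"
proof -
  define s where "s = hform n z d"
  define t where "t = hform n w d"
  have dw: "hform n d w = qcnj t" using t_def by (metis hform_conj)
  have "hform n (tvec n d \<alpha> z) (tvec n d \<alpha> w) =
      hform n z w + qcnj t * qcnj \<alpha> * s + qcnj t * \<alpha> * s + qcnj t * qcnj \<alpha> * hform n d d * \<alpha> * s"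
    unfolding tvec_def
    by (simp add: hform_add_left hform_add_right hform_scale_left hform_scale_right qcnj_mult
        s_def[symmetric] t_def[symmetric] dw algebra_simps)
  also have "\<dots> = hform n z w + qcnj t * (\<alpha> + qcnj \<alpha> + qcnj \<alpha> * hform n d d * \<alpha>) * s"
    by (simp add: algebra_simps)
  finally show ?thesis using C by simp
qed

lemma tvec_inv:
  assumes C: "\<alpha> + qcnj \<alpha> + qcnj \<alpha> * hform n d d * \<alpha> = 0"
  shows "tvec n d (qcnj \<alpha>) (tvec n d \<alpha> z) = z"
proof -
  define s where "s = hform n z d"
  have "tvec n d (qcnj \<alpha>) (tvec n d \<alpha> z) = (\<lambda>i. z i + d i * ((\<alpha> + qcnj \<alpha> + qcnj \<alpha> * hform n d d * \<alpha>) * s))"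
    unfolding tvec_def by (simp add: hform_add_left hform_scale_left s_def[symmetric] algebra_simps)
  then show ?thesis using C by simp
qed

lemma tmat_Sp:
  assumes "n \<ge> 1" "d \<in> qvecs n"
    and C: "\<alpha> + qcnj \<alpha> + qcnj \<alpha> * hform n d d * \<alpha> = 0"
    and C': "\<alpha> + qcnj \<alpha> + \<alpha> * hform n d d * qcnj \<alpha> = 0"
  shows "tmat n d \<alpha> \<in> Sp_n1 n"
proof -
  have C2: "qcnj \<alpha> + qcnj (qcnj \<alpha>) + qcnj (qcnj \<alpha>) * hform n d d * qcnj \<alpha> = 0"
    using C' by (simp add: algebra_simps)
  have "bij_betw (mv n (tmat n d \<alpha>)) (qvecs n) (qvecs n)"
  proof (rule bij_betw_byWitness[where f'="mv n (tmat n d (qcnj \<alpha>))"])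
    show "\<forall>a\<in>qvecs n. mv n (tmat n d (qcnj \<alpha>)) (mv n (tmat n d \<alpha>) a) = a"
    proof
      fix a assume a: "a \<in> qvecs n"
      have "mv n (tmat n d (qcnj \<alpha>)) (mv n (tmat n d \<alpha>) a) = tvec n d (qcnj \<alpha>) (tvec n d \<alpha> a)"
        using assms a mv_qvecs[of n "tmat n d \<alpha>" a] by (simp add: mv_tmat)
      then show "mv n (tmat n d (qcnj \<alpha>)) (mv n (tmat n d \<alpha>) a) = a" using tvec_inv[OF C] by simp
    qed
    show "\<forall>a\<in>qvecs n. mv n (tmat n d \<alpha>) (mv n (tmat n d (qcnj \<alpha>)) a) = a"
    proof
      fix a assume a: "a \<in> qvecs n"
      have "mv n (tmat n d \<alpha>) (mv n (tmat n d (qcnj \<alpha>)) a) = tvec n d (qcnj (qcnj \<alpha>)) (tvec n d (qcnj \<alpha>) a)"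
        using assms a mv_qvecs[of n "tmat n d (qcnj \<alpha>)" a] by (simp add: mv_tmat)
      then show "mv n (tmat n d \<alpha>) (mv n (tmat n d (qcnj \<alpha>)) a) = a" using tvec_inv[OF C2] by simp
    qed
  qed auto
  then show ?thesis unfolding Sp_n1_def using assms by (simp add: mv_tmat tvec_form[OF C])
qed

lemma qr_add: "qr (a + b) = qr a + qr b" by (rule quat_eqI) simp_all
lemma qr_sum: "qr (sum f A) = (\<Sum>i\<in>A. qr (f i))"
  by (induction A rule: infinite_finite_induct) (simp_all add: qr_add)
lemma qr_inj: "qr a = qr b \<longleftrightarrow> a = b" by (metis qr_sel(1))
lemma qr_minus: "qr (- a) = - qr a" by (rule quat_eqI) simp_all

lemma q_of_nat: "qre (of_nat k :: quat) = of_nat k \<and> qi (of_nat k :: quat) = 0 \<and>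
   qj (of_nat k :: quat) = 0 \<and> qk (of_nat k :: quat) = 0"
  by (induct k) simp_all

lemma q_numeral [simp]: "qre (numeral k :: quat) = numeral k" "qi (numeral k :: quat) = 0"
   "qj (numeral k :: quat) = 0" "qk (numeral k :: quat) = 0"
  using q_of_nat[of "numeral k"] by (simp_all only: of_nat_numeral)

lemma inv_cancel1: "(y::quat) \<noteq> 0 \<Longrightarrow> inverse y * (y * z) = z"
  by (simp flip: mult.assoc)
lemma inv_cancel2: "(y::quat) \<noteq> 0 \<Longrightarrow> z * (y * inverse y) = z"
  by simp

lemma hform_S_pos:
  assumes "n \<ge> 1" "u \<in> qvecs n" "u 1 = u (n+1)" "qre (hform n u u) \<le> 0"
  shows "u = (\<lambda>i. 0)"
proof -
  have "hform n u u = qr (qn2 (u 1)) + (\<Sum>i\<in>{2..n}. qr (qn2 (u i))) + qr (qn2 (u 1))"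
    unfolding hform_def using assms(3) by (simp add: mult_cnj)
  then have "qre (hform n u u) = 2 * qn2 (u 1) + (\<Sum>i\<in>{2..n}. qn2 (u i))"
    by (simp flip: qr_sum)
  with assms(4) have z: "2 * qn2 (u 1) + (\<Sum>i\<in>{2..n}. qn2 (u i)) \<le> 0" by simp
  have s0: "(\<Sum>i\<in>{2..n}. qn2 (u i)) \<ge> 0" by (simp add: sum_nonneg qn2_nonneg)
  have q0: "qn2 (u 1) \<ge> 0" by (rule qn2_nonneg)
  have "qn2 (u 1) = 0" using z s0 q0 by linarith
  then have u1: "u 1 = 0" by (simp add: qn2_eq_0)
  have "(\<Sum>i\<in>{2..n}. qn2 (u i)) = 0" using z s0 q0 by linarith
  then have "\<forall>i\<in>{2..n}. qn2 (u i) = 0" by (subst (asm) sum_nonneg_eq_0_iff) (simp_all add: qn2_nonneg)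
  then have ui: "\<forall>i\<in>{2..n}. u i = 0" by (simp add: qn2_eq_0)
  show ?thesis
  proof
    fix i
    show "u i = 0"
    proof (cases "i \<in> {1..n+1}")
      case True
      then consider "i = 1" | "i = n+1" | "i \<in> {2..n}" by force
      then show ?thesis using u1 ui assms(3) by cases auto
    next
      case False then show ?thesis using assms(2) by (simp add: qvecs_def)
    qed
  qed
qed

lemma POS:
  assumes n: "n \<ge> 1" and xq: "x \<in> qvecs n" and yq: "y \<in> qvecs n" and vq: "v \<in> qvecs n"
    and xx: "hform n x x = 0" and yy: "hform n y y = 0" and yx: "hform n y x = 1"
    and vx: "hform n v x = 0" and vy: "hform n v y = 0" and vv: "hform n v v = 0"
  shows "v = (\<lambda>i. 0)"
proof (cases "v (n+1) - v 1 = 0")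
  case True
  then show ?thesis using hform_S_pos[OF n vq] vv by simp
next
  case False
  define w where "w = (\<lambda>i. x i - y i)"
  have xy: "hform n x y = 1" using yx by (metis hform_conj qcnj_1)
  have ww: "hform n w w = - 2"
    unfolding w_def by (simp add: hform_diff_left hform_diff_right xx yy xy yx)
  have vw: "hform n v w = 0" unfolding w_def by (simp add: hform_diff_right vx vy)
  have wv: "hform n w v = 0" using vw by (metis hform_conj qcnj_0)
  define \<alpha> where "\<alpha> = inverse (v (n+1) - v 1) * (w 1 - w (n+1))"
  define u where "u = (\<lambda>i. v i * \<alpha> + w i)"
  have uq: "u \<in> qvecs n" using vq xq yq by (auto simp: qvecs_def u_def w_def)
  have "u (n+1) - u 1 = (v (n+1) - v 1) * \<alpha> + w (n+1) - w 1"
    unfolding u_def by (simp add: algebra_simps)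
  also have "\<dots> = 0" unfolding \<alpha>_def using False by (simp add: inv_cancel1 flip: mult.assoc)
  finally have u1: "u 1 = u (n+1)" by simp
  have "hform n u u = qcnj \<alpha> * hform n v v * \<alpha> + qcnj \<alpha> * hform n w v + hform n v w * \<alpha> + hform n w w"
    unfolding u_def
    by (simp add: hform_add_left hform_add_right hform_scale_left hform_scale_right algebra_simps)
  also have "\<dots> = - 2" by (simp add: vv wv vw ww)
  finally have "qre (hform n u u) \<le> 0" by simp
  then have "u = (\<lambda>i. 0)" using hform_S_pos[OF n uq u1] by simp
  then have "w = (\<lambda>i. v i * (- \<alpha>))" unfolding u_def by (simp add: fun_eq_iff eq_neg_iff_add_eq_0 add.commute)
  then have "hform n w w = qcnj (- \<alpha>) * (hform n v v * (- \<alpha>))"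
    by (simp only: hform_scale_left hform_scale_right mult.assoc)
  then have "hform n w w = 0" using vv by simp
  moreover have "qre (hform n w w) = - 2" using ww by simp
  ultimately show ?thesis by simp
qed

lemma TI:
  assumes n: "n \<ge> 1" and aq: "a \<in> qvecs n" and bq: "b \<in> qvecs n"
    and ab: "hform n a a = hform n b b"
    and D0: "hform n (\<lambda>i. a i - b i) (\<lambda>i. a i - b i) \<noteq> 0"
  shows "\<exists>A\<in>Sp_n1 n. mv n A a = b \<and> (\<forall>w\<in>qvecs n. hform n w (\<lambda>i. a i - b i) = 0 \<longrightarrow> mv n A w = w)"
proof -
  define d where "d = (\<lambda>i. a i - b i)"
  have dq: "d \<in> qvecs n" using aq bq by (auto simp: qvecs_def d_def)
  define x where "x = hform n a d"
  have cx: "qcnj x = hform n d a" unfolding x_def by (metis hform_conj)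
  have c1: "qcnj (hform n a b) = hform n b a" "qcnj (hform n a a) = hform n a a" by (metis hform_conj)+
  have h1: "hform n d d = hform n a a - hform n a b - hform n b a + hform n b b"
    unfolding d_def by (simp add: hform_diff_left hform_diff_right)
  have h2: "x + qcnj x = hform n a a - hform n a b + hform n a a - hform n b a"
    unfolding x_def d_def by (simp add: hform_diff_right c1)
  have "hform n d d = x + qcnj x" unfolding h1 h2 using ab by simp
  then have D: "hform n d d = x + qcnj x" .
  have x0: "x \<noteq> 0" using D0 D unfolding d_def by auto
  have cx0: "qcnj x \<noteq> 0" using x0 by simp
  define \<alpha> where "\<alpha> = - inverse x"
  have ca: "qcnj \<alpha> = - inverse (qcnj x)" unfolding \<alpha>_def by (simp add: qcnj_inverse)
  have e1: "qcnj \<alpha> * hform n d d * \<alpha> = inverse (qcnj x) + inverse x"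
  proof -
    have "qcnj \<alpha> * hform n d d * \<alpha> = inverse (qcnj x) * (x * inverse x) + inverse (qcnj x) * qcnj x * inverse x"
      unfolding ca D \<alpha>_def by (simp add: algebra_simps qcnj_inverse)
    also have "\<dots> = inverse (qcnj x) + inverse x" using x0 cx0 by (simp add: inv_cancel1 mult.assoc)
    finally show ?thesis .
  qed
  have e2: "\<alpha> * hform n d d * qcnj \<alpha> = inverse (qcnj x) + inverse x"
  proof -
    have "\<alpha> * hform n d d * qcnj \<alpha> = inverse x * x * inverse (qcnj x) + inverse x * (qcnj x * inverse (qcnj x))"
      unfolding ca D \<alpha>_def by (simp add: algebra_simps qcnj_inverse)
    also have "\<dots> = inverse (qcnj x) + inverse x" using x0 cx0 by (simp add: inv_cancel1 mult.assoc)
    finally show ?thesis .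
  qed
  have C: "\<alpha> + qcnj \<alpha> + qcnj \<alpha> * hform n d d * \<alpha> = 0" using e1 ca \<alpha>_def by simp
  have C': "\<alpha> + qcnj \<alpha> + \<alpha> * hform n d d * qcnj \<alpha> = 0" using e2 ca \<alpha>_def by simp
  have S: "tmat n d \<alpha> \<in> Sp_n1 n" by (rule tmat_Sp[OF n dq C C'])
  have "mv n (tmat n d \<alpha>) a = b"
  proof -
    have "mv n (tmat n d \<alpha>) a = (\<lambda>i. a i + d i * (\<alpha> * x))"
      using mv_tmat[OF n dq aq] by (simp add: tvec_def x_def)
    also have "\<dots> = b" unfolding \<alpha>_def d_def using x0 by (simp add: fun_eq_iff)
    finally show ?thesis .
  qed
  moreover have "\<forall>w\<in>qvecs n. hform n w d = 0 \<longrightarrow> mv n (tmat n d \<alpha>) w = w"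
    using mv_tmat[OF n dq] by (simp add: tvec_def)
  ultimately show ?thesis using S unfolding d_def by blast
qed

lemma TII:
  assumes n: "n \<ge> 1" and vq: "v \<in> qvecs n" and vv: "hform n v v = 0" and t: "t + qcnj t = 0"
  shows "tmat n v t \<in> Sp_n1 n \<and> (\<forall>z\<in>qvecs n. mv n (tmat n v t) z = (\<lambda>i. z i + v i * (t * hform n z v)))"
proof -
  have C: "t + qcnj t + qcnj t * hform n v v * t = 0" using t vv by simp
  have C': "t + qcnj t + t * hform n v v * qcnj t = 0" using t vv by simp
  show ?thesis using tmat_Sp[OF n vq C C'] mv_tmat[OF n vq] by (simp add: tvec_def)
qed

lemma Sp_form: "A \<in> Sp_n1 n \<Longrightarrow> z \<in> qvecs n \<Longrightarrow> w \<in> qvecs n \<Longrightarrow>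
  hform n (mv n A z) (mv n A w) = hform n z w"
  unfolding Sp_n1_def by blast

lemma null_diff:
  assumes "hform n a a = 0" "hform n w w = 0"
  shows "hform n (\<lambda>i. a i - w i) (\<lambda>i. a i - w i) = - qr (2 * qre (hform n a w))"
proof -
  have c: "hform n w a = qcnj (hform n a w)" by (metis hform_conj)
  have "hform n (\<lambda>i. a i - w i) (\<lambda>i. a i - w i) = - (hform n a w + qcnj (hform n a w))"
    using assms by (simp add: hform_diff_left hform_diff_right c)
  then show ?thesis by (simp add: add_cnj)
qed

lemma NTI:
  assumes n: "n \<ge> 1" and "a \<in> qvecs n" "w \<in> qvecs n" "hform n a a = 0" "hform n w w = 0"
    and r: "qre (hform n a w) \<noteq> 0"
  shows "\<exists>B\<in>Sp_n1 n. mv n B a = w"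
proof -
  have "hform n (\<lambda>i. a i - w i) (\<lambda>i. a i - w i) \<noteq> 0"
    using null_diff[OF assms(4,5)] r by (metis qr_inj qr_minus qr_0 mult_eq_0_iff zero_neq_numeral neg_equal_0_iff_equal)
  then show ?thesis using TI[OF n assms(2,3)] assms(4,5) by auto
qed

lemma comp2:
  assumes "B1 \<in> Sp_n1 n" "B2 \<in> Sp_n1 n" "mv n B1 a = w" "mv n B2 w = b"
  shows "\<exists>B\<in>Sp_n1 n. mv n B a = b"
  using assms Sp_mmul[OF assms(2,1)] mv_mmul by metis

lemma STEP0:
  assumes n: "n \<ge> 1" and aq: "a \<in> qvecs n" and bq: "b \<in> qvecs n" and yq: "y \<in> qvecs n"
    and aa: "hform n a a = 0" and bb: "hform n b b = 0" and yy: "hform n y y = 0"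
    and yb: "hform n y b = 1" and anz: "a \<noteq> (\<lambda>i. 0)"
  shows "\<exists>B\<in>Sp_n1 n. mv n B a = b"
proof -
  define g where "g = hform n a b"
  define h where "h = hform n a y"
  have by1: "hform n b y = 1" using yb by (metis hform_conj qcnj_1)
  show ?thesis
  proof (cases "qre h \<noteq> 0")
    case True
    obtain B1 where "B1 \<in> Sp_n1 n" "mv n B1 a = y" using NTI[OF n aq yq aa yy] True h_def by blast
    moreover obtain B2 where "B2 \<in> Sp_n1 n" "mv n B2 y = b" using NTI[OF n yq bq yy bb] yb by auto
    ultimately show ?thesis using comp2 by metis
  next
    case hr: False
    show ?thesis
    proof (cases "qre g \<noteq> 0")
      case True
      then show ?thesis using NTI[OF n aq bq aa bb] g_def by auto
    next
      case gr: False
      show ?thesis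
      proof (cases "g = 0")
        case False
        define w where "w = (\<lambda>i. y i + b i * g)"
        have wq: "w \<in> qvecs n" using yq bq by (auto simp: qvecs_def w_def)
        have "hform n w w = g + qcnj g"
          unfolding w_def by (simp add: hform_add_left hform_add_right hform_scale_left hform_scale_right yy bb yb by1)
        then have ww: "hform n w w = 0" using gr by (simp add: add_cnj)
        have "hform n w b = 1" unfolding w_def by (simp add: hform_add_left hform_scale_left yb bb)
        then have wb: "qre (hform n w b) \<noteq> 0" by simp
        have "hform n a w = h + qcnj g * g" unfolding w_def
          by (simp add: hform_add_right hform_scale_right h_def g_def)
        then have aw: "qre (hform n a w) \<noteq> 0" using hr False by (simp add: mult_cnj qn2_eq_0)
        obtain B1 where "B1 \<in> Sp_n1 n" "mv n B1 a = w" using NTI[OF n aq wq aa ww aw] by blast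
        moreover obtain B2 where "B2 \<in> Sp_n1 n" "mv n B2 w = b" using NTI[OF n wq bq ww bb wb] by auto
        ultimately show ?thesis using comp2 by metis
      next
        case g0: True
        show ?thesis
        proof (cases "h = 0")
          case False
          define w where "w = (\<lambda>i. y i * (1 + h))"
          have wq: "w \<in> qvecs n" using yq by (auto simp: qvecs_def w_def)
          have ww: "hform n w w = 0" unfolding w_def by (simp add: hform_scale_left hform_scale_right yy)
          have "hform n w b = 1 + h" unfolding w_def by (simp add: hform_scale_left yb)
          then have wb: "qre (hform n w b) \<noteq> 0" using hr by simp
          have "hform n a w = h + qcnj h * h" unfolding w_def
            by (simp only: hform_scale_right) (simp add: h_def algebra_simps)
          then have aw: "qre (hform n a w) \<noteq> 0" using hr False by (simp add: mult_cnj qn2_eq_0)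
          obtain B1 where "B1 \<in> Sp_n1 n" "mv n B1 a = w" using NTI[OF n aq wq aa ww aw] by blast
          moreover obtain B2 where "B2 \<in> Sp_n1 n" "mv n B2 w = b" using NTI[OF n wq bq ww bb wb] by auto
          ultimately show ?thesis using comp2 by metis
        next
          case True
          have "a = (\<lambda>i. 0)"
            by (rule POS[OF n bq yq aq bb yy yb]) (use True g0 h_def g_def aa in auto)
          then show ?thesis using anz by simp
        qed
      qed
    qed
  qed
qed

lemma STEPK:
  assumes n: "n \<ge> 1" and k1: "1 \<le> k" and km: "k < m"
    and Qq: "\<forall>i\<in>{1..m}. Q i \<in> qvecs n" and Qn: "\<forall>i\<in>{1..m}. hform n (Q i) (Q i) = 0"
    and Q1: "\<forall>j\<in>{2..m}. hform n (Q j) (Q 1) = 1"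
    and aq: "a \<in> qvecs n" and aa: "hform n a a = 0"
    and aQ: "\<forall>i\<in>{1..k}. hform n a (Q i) = hform n (Q (Suc k)) (Q i)"
  shows "\<exists>B\<in>Sp_n1 n. mv n B a = Q (Suc k) \<and> (\<forall>i\<in>{1..k}. mv n B (Q i) = Q i)"
proof -
  define b where "b = Q (Suc k)"
  define d where "d = (\<lambda>i. a i - b i)"
  have bq: "b \<in> qvecs n" using Qq km by (simp add: b_def)
  have bb: "hform n b b = 0" using Qn km by (simp add: b_def)
  have dq: "d \<in> qvecs n" using aq bq by (auto simp: qvecs_def d_def)
  have dQ: "\<forall>i\<in>{1..k}. hform n d (Q i) = 0"
    using aQ unfolding d_def b_def by (simp add: hform_diff_left)
  have Qd: "\<forall>i\<in>{1..k}. hform n (Q i) d = 0"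
    using dQ by (metis hform_conj qcnj_0)
  have Q1q: "Q 1 \<in> qvecs n" and Q11: "hform n (Q 1) (Q 1) = 0" using Qq Qn km by auto
  show ?thesis
  proof (cases "hform n d d = 0")
    case False
    obtain B where B: "B \<in> Sp_n1 n" "mv n B a = b"
      "\<forall>w\<in>qvecs n. hform n w d = 0 \<longrightarrow> mv n B w = w"
      using TI[OF n aq bq] aa bb False unfolding d_def by auto
    have "\<forall>i\<in>{1..k}. mv n B (Q i) = Q i" using B(3) Qd Qq km by auto
    then show ?thesis using B b_def by blast
  next
    case dd: True
    show ?thesis
    proof (cases "k \<ge> 2")
      case True
      have "d = (\<lambda>i. 0)"
        by (rule POS[OF n Q1q _ dq Q11 _ _ _ _ dd, of "Q 2"])
          (use Qq Qn Q1 dQ True km in auto)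
      then have "a = b" unfolding d_def by (simp add: fun_eq_iff)
      then show ?thesis using Sp_idm mv_idm Qq km aq b_def by (metis atLeastAtMost_iff le_trans less_imp_le)
    next
      case False
      then have k: "k = 1" using k1 by simp
      have b2: "b = Q 2" using k b_def by (simp add: numeral_2_eq_2)
      have b1: "hform n b (Q 1) = 1" using Q1 km k b2 by auto
      have b1': "hform n (Q 1) b = 1" using b1 by (metis hform_conj qcnj_1)
      have d1: "hform n d (Q 1) = 0" using dQ k by simp
      have d1': "hform n (Q 1) d = 0" using Qd k by simp
      define c where "c = hform n d b"
      define d' where "d' = (\<lambda>i. d i - Q 1 i * c)"
      have d'q: "d' \<in> qvecs n" using dq Q1q by (auto simp: qvecs_def d'_def)
      have "d' = (\<lambda>i. 0)"
      proof (rule POS[OF n Q1q bq d'q Q11 bb b1])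
        show "hform n d' (Q 1) = 0" unfolding d'_def by (simp add: hform_diff_left hform_scale_left d1 Q11 del: One_nat_def)
        show "hform n d' b = 0" unfolding d'_def by (simp add: hform_diff_left hform_scale_left b1' c_def del: One_nat_def)
        show "hform n d' d' = 0" unfolding d'_def
          by (simp add: hform_diff_left hform_diff_right hform_scale_left hform_scale_right d1 d1' Q11 dd del: One_nat_def)
      qed
      then have ad: "a = (\<lambda>i. b i + Q 1 i * c)" unfolding d'_def d_def by (simp add: fun_eq_iff algebra_simps)
      have "hform n a a = qcnj c + c" unfolding ad
        by (simp add: hform_add_left hform_add_right hform_scale_left hform_scale_right bb b1 b1' Q11 del: One_nat_def)
      then have "c + qcnj c = 0" using aa by (simp add: add.commute)
      then have cc: "(- c) + qcnj (- c) = 0" by (metis minus_add_distrib neg_equal_0_iff_equal qcnj_minus add.commute)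
      obtain T: "tmat n (Q 1) (- c) \<in> Sp_n1 n"
        "\<forall>z\<in>qvecs n. mv n (tmat n (Q 1) (- c)) z = (\<lambda>i. z i + Q 1 i * (- c * hform n z (Q 1)))"
        using TII[OF n Q1q Q11 cc] by blast
      have a1: "hform n a (Q 1) = 1" unfolding ad by (simp add: hform_add_left hform_scale_left b1 Q11 del: One_nat_def)
      have "mv n (tmat n (Q 1) (- c)) a = b" using T(2) aq a1 by (simp add: ad del: One_nat_def)
      moreover have "mv n (tmat n (Q 1) (- c)) (Q 1) = Q 1" using T(2) Q1q Q11 by (simp del: One_nat_def)
      ultimately show ?thesis using T(1) k b_def by auto
    qed
  qed
qed

lemma WITT:
  fixes m :: nat and P Q :: "nat \<Rightarrow> qvec"
  assumes n: "n \<ge> 1" and m: "m \<ge> 2"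
    and Pq: "\<forall>i\<in>{1..m}. P i \<in> qvecs n" and Qq: "\<forall>i\<in>{1..m}. Q i \<in> qvecs n"
    and Pn: "\<forall>i\<in>{1..m}. hform n (P i) (P i) = 0"
    and G: "\<forall>i\<in>{1..m}. \<forall>j\<in>{1..m}. hform n (P i) (P j) = hform n (Q i) (Q j)"
    and P1: "\<forall>j\<in>{2..m}. hform n (P j) (P 1) = 1"
  shows "\<exists>A\<in>Sp_n1 n. \<forall>i\<in>{1..m}. mv n A (P i) = Q i"
proof -
  have Qn: "\<forall>i\<in>{1..m}. hform n (Q i) (Q i) = 0" using Pn G by auto
  have Q1: "\<forall>j\<in>{2..m}. hform n (Q j) (Q 1) = 1" using P1 G by auto
  have "\<forall>k. k \<le> m \<longrightarrow> (\<exists>A\<in>Sp_n1 n. \<forall>i\<in>{1..k}. mv n A (P i) = Q i)"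
  proof
    fix k show "k \<le> m \<longrightarrow> (\<exists>A\<in>Sp_n1 n. \<forall>i\<in>{1..k}. mv n A (P i) = Q i)"
    proof (induction k)
      case 0 then show ?case using Sp_idm by auto
    next
      case (Suc k)
      show ?case
      proof
        assume km: "Suc k \<le> m"
        then obtain A where A: "A \<in> Sp_n1 n" "\<forall>i\<in>{1..k}. mv n A (P i) = Q i" using Suc.IH by auto
        define a where "a = mv n A (P (Suc k))"
        have aq: "a \<in> qvecs n" by (simp add: a_def)
        have PSk: "P (Suc k) \<in> qvecs n" using Pq km by simp
        have aa: "hform n a a = 0" unfolding a_def using Sp_form[OF A(1) PSk PSk] Pn km by simp
        obtain B where B: "B \<in> Sp_n1 n" "mv n B a = Q (Suc k)" "\<forall>i\<in>{1..k}. mv n B (Q i) = Q i"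
        proof (cases "k = 0")
          case True
          have P2: "P 2 \<in> qvecs n" using Pq m by simp
          have "hform n a (mv n A (P 2)) = hform n (P 1) (P 2)"
            unfolding a_def using Sp_form[OF A(1) PSk P2] True by simp
          also have "\<dots> = 1" using P1 m by (metis hform_conj qcnj_1 atLeastAtMost_iff order_refl)
          finally have "a \<noteq> (\<lambda>i. 0)" by auto
          moreover have "hform n (Q 2) (Q 1) = 1" using Q1 m by simp
          ultimately obtain B where "B \<in> Sp_n1 n" "mv n B a = Q 1"
            using STEP0[OF n aq _ _ aa, of "Q 1" "Q 2"] Qq Qn m by auto
          then show ?thesis using that True by auto
        next
          case False
          have "\<forall>i\<in>{1..k}. hform n a (Q i) = hform n (Q (Suc k)) (Q i)"
          proof
            fix i assume i: "i \<in> {1..k}"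
            have Pi: "P i \<in> qvecs n" using Pq i km by simp
            have "hform n a (Q i) = hform n (P (Suc k)) (P i)"
              unfolding a_def using Sp_form[OF A(1) PSk Pi] A(2) i by simp
            then show "hform n a (Q i) = hform n (Q (Suc k)) (Q i)" using G i km by simp
          qed
          moreover have "1 \<le> k" "k < m" using False km by auto
          ultimately show ?thesis using STEPK[OF n _ _ Qq Qn Q1 aq aa] that by blast
        qed
        have "mmul n B A \<in> Sp_n1 n" using Sp_mmul[OF B(1) A(1)] .
        moreover have "\<forall>i\<in>{1..Suc k}. mv n (mmul n B A) (P i) = Q i"
        proof
          fix i assume i: "i \<in> {1..Suc k}"
          show "mv n (mmul n B A) (P i) = Q i"
          proof (cases "i = Suc k")
            case True then show ?thesis using B(2) by (simp add: mv_mmul a_def)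
          next
            case False
            then have "i \<in> {1..k}" using i by auto
            then show ?thesis using A(2) B(3) by (simp add: mv_mmul)
          qed
        qed
        ultimately show "\<exists>A\<in>Sp_n1 n. \<forall>i\<in>{1..Suc k}. mv n A (P i) = Q i" by blast
      qed
    qed
  qed
  then show ?thesis by blast
qed

definition cj :: "quat \<Rightarrow> quat \<Rightarrow> quat" where "cj \<mu> x = \<mu> * x * qcnj \<mu>"

context
  fixes \<mu> :: quat assumes u: "qabs \<mu> = 1"
begin

lemma u1: "\<mu> * qcnj \<mu> = 1" and u2: "qcnj \<mu> * \<mu> = 1" using unit_cnj[OF u] by auto

lemma cj_mult: "cj \<mu> (x * y) = cj \<mu> x * cj \<mu> y"
proof -
  have "cj \<mu> x * cj \<mu> y = \<mu> * (x * ((qcnj \<mu> * \<mu>) * (y * qcnj \<mu>)))" by (simp only: cj_def mult.assoc)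
  also have "\<dots> = \<mu> * (x * (y * qcnj \<mu>))" using u2 by simp
  also have "\<dots> = cj \<mu> (x * y)" by (simp only: cj_def mult.assoc)
  finally show ?thesis by simp
qed

lemma cj_1: "cj \<mu> 1 = 1" using u1 by (simp add: cj_def)

lemma cj_inverse: "cj \<mu> (inverse x) = inverse (cj \<mu> x)"
proof (cases "x = 0")
  case True then show ?thesis by (simp add: cj_def)
next
  case False
  have "cj \<mu> x * cj \<mu> (inverse x) = 1" using False by (simp add: cj_1 flip: cj_mult)
  then show ?thesis by (metis inverse_unique)
qed

lemma cj_qr: "cj \<mu> (qr r) = qr r"
proof -
  have "cj \<mu> (qr r) = qr r * (\<mu> * qcnj \<mu>)" unfolding cj_def by (simp only: qr_comm mult.assoc)
  then show ?thesis using u1 by simp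
qed

lemma cj_eq0: "cj \<mu> x = 0 \<Longrightarrow> x = 0"
proof -
  assume "cj \<mu> x = 0"
  then have "qcnj \<mu> * cj \<mu> x * \<mu> = 0" by simp
  then show "x = 0" unfolding cj_def using u2 by (simp add: mult.assoc flip: mult.assoc[of "qcnj \<mu>" \<mu>])
qed

end

lemma cj_qcnj: "cj \<mu> (qcnj x) = qcnj (cj \<mu> x)"
  by (simp add: cj_def qcnj_mult mult.assoc)

lemma cj_add: "cj \<mu> (x + y) = cj \<mu> x + cj \<mu> y"
  by (simp add: cj_def algebra_simps)

lemma qscale_qr: "qscale r z = qr r * z"
  by (rule quat_eqI) (simp_all add: qscale_def)

lemma quat_decomp: "z = qr (qre z) + qim z"
  by (rule quat_eqI) (simp_all add: qim_def)

lemma RECOVER: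
  assumes u: "qabs \<mu> = 1" and a0: "ga \<noteq> 0"
    and ga: "ha = cj \<mu> ga" and X: "Y = cj \<mu> X"
    and XP: "X = inverse ga * gb" and XQ: "Y = inverse ha * hb"
  shows "hb = cj \<mu> gb"
proof -
  have h0: "ha \<noteq> 0" using ga a0 cj_eq0[OF u] by auto
  have "hb = ha * Y" using XQ h0 by (simp add: inv_cancel1 flip: mult.assoc)
  also have "\<dots> = cj \<mu> (ga * X)" using ga X cj_mult[OF u] by simp
  also have "ga * X = gb" using XP a0 by (simp add: inv_cancel1 flip: mult.assoc)
  finally show ?thesis .
qed

lemma concat_pairs:
  "concat (map (\<lambda>k. map (\<lambda>j. f k j) (J k)) L) = map (\<lambda>(k, j). f k j) (concat (map (\<lambda>k. map (Pair k) (J k)) L))"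
  by (simp add: map_concat o_def)

lemma map_eq_on: "map f L = map g L \<Longrightarrow> x \<in> set L \<Longrightarrow> f x = g x"
  by (simp add: map_eq_conv)

lemma qabs1: "qabs x = 1 \<Longrightarrow> (qre x)\<^sup>2 + (qi x)\<^sup>2 + (qj x)\<^sup>2 + (qk x)\<^sup>2 = 1"
  unfolding qabs_def by simp

lemma G23LEM:
  assumes u: "qabs \<mu> = 1" and x: "qabs x = 1" and y: "qabs y = 1"
    and A: "arccos (- qre x) = arccos (- qre y)"
    and U: "(if arccos (- qre y) \<noteq> 0 then qscale (1 / qabs (qim y)) (qim y) else 0)
          = cj \<mu> (if arccos (- qre x) \<noteq> 0 then qscale (1 / qabs (qim x)) (qim x) else 0)"
  shows "y = cj \<mu> x"
proof -
  have x1: "(qre x)\<^sup>2 + (qi x)\<^sup>2 + (qj x)\<^sup>2 + (qk x)\<^sup>2 = 1" using qabs1[OF x] .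
  have y1: "(qre y)\<^sup>2 + (qi y)\<^sup>2 + (qj y)\<^sup>2 + (qk y)\<^sup>2 = 1" using qabs1[OF y] .
  have "(qre x)\<^sup>2 \<le> 1" using x1 zero_le_power2[of "qi x"] zero_le_power2[of "qj x"] zero_le_power2[of "qk x"] by linarith
  then have bx: "\<bar>- qre x\<bar> \<le> 1" by (simp add: abs_square_le_1)
  have "(qre y)\<^sup>2 \<le> 1" using y1 zero_le_power2[of "qi y"] zero_le_power2[of "qj y"] zero_le_power2[of "qk y"] by linarith
  then have by': "\<bar>- qre y\<bar> \<le> 1" by (simp add: abs_square_le_1)
  have re: "qre x = qre y" using A arccos_eq_iff[of "- qre x" "- qre y"] bx by' by simp
  have imsq: "(qi x)\<^sup>2 + (qj x)\<^sup>2 + (qk x)\<^sup>2 = (qi y)\<^sup>2 + (qj y)\<^sup>2 + (qk y)\<^sup>2"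
  proof -
    have "(qre x)\<^sup>2 = (qre y)\<^sup>2" using re by simp
    then show ?thesis using x1 y1 by linarith
  qed
  have qimx: "qabs (qim x) = qabs (qim y)" unfolding qabs_def qim_def using imsq by simp
  show ?thesis
  proof (cases "arccos (- qre x) = 0")
    case True
    then have "- qre x = 1" using arccos_eq_0_iff[of "- qre x"] bx by (auto simp: abs_le_iff)
    then have "(qre x)\<^sup>2 = 1" by (metis minus_minus one_power2 power2_minus)
    then have "(qi x)\<^sup>2 + (qj x)\<^sup>2 + (qk x)\<^sup>2 = 0" using x1 by linarith
    then have "qi x = 0 \<and> qj x = 0 \<and> qk x = 0" by (simp add: add_nonneg_eq_0_iff)
    moreover have "qi y = 0 \<and> qj y = 0 \<and> qk y = 0" using imsq calculation
      by (simp add: add_nonneg_eq_0_iff)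
    ultimately have "x = qr (qre x)" "y = qr (qre y)" by (simp_all add: qre_qr_eq)
    then show ?thesis using re cj_qr[OF u] by metis
  next
    case False
    then have U': "qscale (1 / qabs (qim y)) (qim y) = cj \<mu> (qscale (1 / qabs (qim x)) (qim x))"
      using U A by simp
    show ?thesis
    proof (cases "qabs (qim x) = 0")
      case True
      then have "(qi x)\<^sup>2 + (qj x)\<^sup>2 + (qk x)\<^sup>2 = 0" unfolding qabs_def qim_def by simp
      then have "qi x = 0 \<and> qj x = 0 \<and> qk x = 0" "qi y = 0 \<and> qj y = 0 \<and> qk y = 0" using imsq
        by (simp_all add: add_nonneg_eq_0_iff)
      then have "x = qr (qre x)" "y = qr (qre y)" by (simp_all add: qre_qr_eq)
      then show ?thesis using re cj_qr[OF u] by metis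
    next
      case False
      define r where "r = qabs (qim x)"
      have r0: "r \<noteq> 0" using False r_def by simp
      have rr: "qr r * qr (1/r) = 1" using r0 by (rule_tac quat_eqI) simp_all
      have "qim y = (qr r * qr (1/r)) * qim y" using rr by simp
      also have "\<dots> = qr r * qscale (1 / r) (qim y)" by (simp add: qscale_qr mult.assoc)
      finally have "qim y = qr r * qscale (1 / r) (qim y)" .
      also
      have "\<dots> = qr r * cj \<mu> (qr (1 / r) * qim x)" using U' qimx r_def by (simp add: qscale_qr)
      also have "\<dots> = cj \<mu> (qim x)"
      proof -
        have "qr r * qr (1/r) = 1" using r0 by (rule_tac quat_eqI) simp_all
        then have "qr r * cj \<mu> (qr (1 / r) * qim x) = cj \<mu> (qr r * (qr (1/r) * qim x))"
          by (simp add: cj_mult[OF u] cj_qr[OF u])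
        also have "\<dots> = cj \<mu> (qim x)" using \<open>qr r * qr (1/r) = 1\<close> by (simp flip: mult.assoc)
        finally show ?thesis .
      qed
      finally have iy: "qim y = cj \<mu> (qim x)" .
      have "y = qr (qre y) + qim y" by (rule quat_decomp)
      also have "\<dots> = cj \<mu> (qr (qre x)) + cj \<mu> (qim x)" using iy re cj_qr[OF u] by simp
      also have "\<dots> = cj \<mu> x" by (simp flip: cj_add quat_decomp)
      finally show ?thesis .
    qed
  qed
qed

lemma qline_scale: assumes "(c::quat) \<noteq> 0" shows "qline (\<lambda>k. z k * c) = qline z"
proof
  show "qline (\<lambda>k. z k * c) \<subseteq> qline z"
  proof
    fix x assume "x \<in> qline (\<lambda>k. z k * c)"
    then obtain e where "e \<noteq> 0" "x = (\<lambda>i. z i * c * e)" unfolding qline_def by auto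
    then show "x \<in> qline z" unfolding qline_def using assms
      by (auto simp: mult.assoc intro!: exI[of _ "c * e"])
  qed
next
  show "qline z \<subseteq> qline (\<lambda>k. z k * c)"
  proof
    fix x assume "x \<in> qline z"
    then obtain e where e: "e \<noteq> 0" "x = (\<lambda>i. z i * e)" unfolding qline_def by auto
    have "c * (inverse c * e) = e" using assms by (simp flip: mult.assoc)
    then have "x = (\<lambda>i. z i * c * (inverse c * e))" using e by (simp add: mult.assoc)
    moreover have "inverse c * e \<noteq> 0" using e assms by simp
    ultimately show "x \<in> qline (\<lambda>k. z k * c)" unfolding qline_def by blast
  qed
qed

lemma mv_scale: "mv n A (\<lambda>k. z k * c) = (\<lambda>i. mv n A z i * c)"
  by (simp add: mv_def sum_distrib_right mult.assoc fun_eq_iff del: sum.cl_ivl_Suc)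

lemma mv_qline: "mv n A ` qline z = qline (mv n A z)"
proof -
  have e: "qline w = (\<lambda>c. \<lambda>i. w i * c) ` {c. c \<noteq> 0}" for w by (auto simp: qline_def)
  show ?thesis unfolding e image_image by (simp add: mv_scale)
qed

lemma cr_eval: "hform n z3 z1 = 1 \<Longrightarrow> hform n z4 z1 = 1 \<Longrightarrow>
  cross_ratio n z1 z2 z3 z4 = inverse (hform n z3 z2) * hform n z4 z2"
  by (simp add: cross_ratio_def)

lemma A23_eval:
  assumes "hform n (P 2) (P 1) = 1" "hform n (P 3) (P 1) = 1" "qabs (hform n (P 3) (P 2)) = 1"
  shows "A23 n P = arccos (- qre (hform n (P 3) (P 2)))"
proof -
  have "hform n (P 1) (P 2) = 1" using assms(1) by (metis hform_conj qcnj_1)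
  moreover have "hform n (P 2) (P 3) = qcnj (hform n (P 3) (P 2))" by (metis hform_conj)
  moreover have "qabs (qcnj x) = qabs x" for x by (simp add: qabs_def)
  ultimately show ?thesis using assms unfolding A23_def herm_triple_def by simp
qed

lemma TUPLE:
  fixes m :: nat and P :: "nat \<Rightarrow> qvec"
  assumes n: "n \<ge> 1" and m: "m \<ge> 4" and pb: "\<forall>i\<in>{1..m}. p i \<in> bdry n"
    and dist: "\<forall>i\<in>{1..m}. \<forall>j\<in>{1..m}. i \<noteq> j \<longrightarrow> p i \<noteq> p j"
    and L: "is_lift m p P" and S: "semi_normalized n m P"
  shows "\<forall>i\<in>{1..m}. P i \<in> qvecs n \<and> hform n (P i) (P i) = 0 \<and> p i = qline (P i)"
    and "\<forall>j\<in>{2..m}. hform n (P j) (P 1) = 1"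
    and "qabs (hform n (P 3) (P 2)) = 1"
    and "\<forall>j\<in>{4..m}. hform n (P 2) (P j) \<noteq> 0"
proof -
  show A: "\<forall>i\<in>{1..m}. P i \<in> qvecs n \<and> hform n (P i) (P i) = 0 \<and> p i = qline (P i)"
  proof
    fix i assume i: "i \<in> {1..m}"
    obtain z where z: "p i = qline z" "z \<in> qvecs n" "hform n z z = 0" using pb i unfolding bdry_def by blast
    obtain c where c: "c \<noteq> 0" "P i = (\<lambda>k. z k * c)" proof -
      have "P i \<in> p i" using L i unfolding is_lift_def by blast
      then show ?thesis using that z(1) unfolding qline_def by blast
    qed
    have "P i \<in> qvecs n" using z(2) c by (auto simp: qvecs_def)
    moreover have "hform n (P i) (P i) = 0" using c z by (simp add: hform_scale_left hform_scale_right)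
    moreover have "p i = qline (P i)" using c z qline_scale by simp
    ultimately show "P i \<in> qvecs n \<and> hform n (P i) (P i) = 0 \<and> p i = qline (P i)" by simp
  qed
  show B: "\<forall>j\<in>{2..m}. hform n (P j) (P 1) = 1" using S unfolding semi_normalized_def gram_def by simp
  show "qabs (hform n (P 3) (P 2)) = 1" using S unfolding semi_normalized_def gram_def by simp
  show "\<forall>j\<in>{4..m}. hform n (P 2) (P j) \<noteq> 0"
  proof (intro ballI notI)
    fix j assume j: "j \<in> {4..m}" and h: "hform n (P 2) (P j) = 0"
    have h': "hform n (P j) (P 2) = 0" using h by (metis hform_conj qcnj_0)
    define v where "v = (\<lambda>k. P j k - P 2 k)"
    have q: "P 1 \<in> qvecs n" "P 2 \<in> qvecs n" "P j \<in> qvecs n" and nl: "hform n (P 1) (P 1) = 0"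
      "hform n (P 2) (P 2) = 0" "hform n (P j) (P j) = 0" using A j m by auto
    have b: "hform n (P 2) (P 1) = 1" "hform n (P j) (P 1) = 1" using B j m by auto
    have vq: "v \<in> qvecs n" using q by (auto simp: qvecs_def v_def)
    have "v = (\<lambda>k. 0)"
    proof (rule POS[OF n q(1,2) vq nl(1,2) b(1)])
      show "hform n v (P 1) = 0" unfolding v_def by (simp add: hform_diff_left b del: One_nat_def)
      show "hform n v (P 2) = 0" unfolding v_def by (simp add: hform_diff_left h' nl del: One_nat_def)
      show "hform n v v = 0" unfolding v_def by (simp add: hform_diff_left hform_diff_right h h' nl)
    qed
    then have "P j = P 2" unfolding v_def by (simp add: fun_eq_iff)
    moreover have "(2::nat) \<in> {1..m}" "j \<in> {1..m}" using j m by auto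
    ultimately have "p j = p 2" using A by metis
    then show False using dist j m by auto
  qed
qed

lemma app3: "length a1 = length b1 \<Longrightarrow> length a2 = length b2 \<Longrightarrow> a1 @ a2 @ a3 = b1 @ b2 @ b3 \<Longrightarrow>
  a1 = b1 \<and> a2 = b2 \<and> a3 = b3"
  by simp

lemma pairs_concat: "map g (concat (map (\<lambda>k. map (Pair k) (J k)) L)) = concat (map (\<lambda>k. map (\<lambda>j. g (k, j)) (J k)) L)"
  by (simp add: map_concat o_def)

theorem corollary1p6:
  fixes n m :: nat and p q :: "nat \<Rightarrow> qvec set" and P Q :: "nat \<Rightarrow> qvec"
  assumes "n \<ge> 1" and "m \<ge> 4"
    and "\<forall>i\<in>{1..m}. p i \<in> bdry n" and "\<forall>i\<in>{1..m}. \<forall>j\<in>{1..m}. i \<noteq> j \<longrightarrow> p i \<noteq> p j"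
    and "\<forall>i\<in>{1..m}. q i \<in> bdry n" and "\<forall>i\<in>{1..m}. \<forall>j\<in>{1..m}. i \<noteq> j \<longrightarrow> q i \<noteq> q j"
    and "is_lift m p P" and "semi_normalized n m P"
    and "is_lift m q Q" and "semi_normalized n m Q"
    and "Sp1_congruent (Finv n m P) (Finv n m Q)"
    and "A23 n P = A23 n Q"
  shows "PSp_congruent n m p q"
proof -
  note TP = TUPLE[OF assms(1,2,3,4,7,8)]
  note TQ = TUPLE[OF assms(1,2,5,6,9,10)]
  obtain \<mu> where u: "qabs \<mu> = 1" and F: "Finv n m Q = map (\<lambda>x. \<mu> * x * qcnj \<mu>) (Finv n m P)"
    using assms(11) unfolding Sp1_congruent_def by blast
  have Fc: "Finv n m Q = map (cj \<mu>) (Finv n m P)" using F by (simp add: cj_def[abs_def])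
  have U0: "u0 n Q = cj \<mu> (u0 n P)" and CR: "cross_ratios n m Q = map (cj \<mu>) (cross_ratios n m P)"
    using Fc unfolding Finv_def by simp_all
  define PS where "PS = concat (map (\<lambda>k. map (Pair k) [k+1..<m+1]) [4..<m+1])"
  have "map (\<lambda>j. cross_ratio n (Q 1) (Q 2) (Q 3) (Q j)) [4..<m+1] @
        map (\<lambda>j. cross_ratio n (Q 1) (Q 3) (Q 2) (Q j)) [4..<m+1] @
        map (\<lambda>(k, j). cross_ratio n (Q 1) (Q k) (Q 2) (Q j)) PS =
        map (\<lambda>j. cj \<mu> (cross_ratio n (P 1) (P 2) (P 3) (P j))) [4..<m+1] @
        map (\<lambda>j. cj \<mu> (cross_ratio n (P 1) (P 3) (P 2) (P j))) [4..<m+1] @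
        map (\<lambda>x. cj \<mu> ((\<lambda>(k, j). cross_ratio n (P 1) (P k) (P 2) (P j)) x)) PS"
    using CR unfolding cross_ratios_def PS_def pairs_concat by (simp add: map_concat o_def)
  from app3[OF _ _ this]
  have L1: "map (\<lambda>j. cross_ratio n (Q 1) (Q 2) (Q 3) (Q j)) [4..<m+1] =
        map (\<lambda>j. cj \<mu> (cross_ratio n (P 1) (P 2) (P 3) (P j))) [4..<m+1]"
    and L2: "map (\<lambda>j. cross_ratio n (Q 1) (Q 3) (Q 2) (Q j)) [4..<m+1] =
        map (\<lambda>j. cj \<mu> (cross_ratio n (P 1) (P 3) (P 2) (P j))) [4..<m+1]"
    and L3: "map (\<lambda>(k, j). cross_ratio n (Q 1) (Q k) (Q 2) (Q j)) PS =
        map (\<lambda>x. cj \<mu> ((\<lambda>(k, j). cross_ratio n (P 1) (P k) (P 2) (P j)) x)) PS"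
    by simp_all
  have X1: "cross_ratio n (Q 1) (Q 2) (Q 3) (Q k) = cj \<mu> (cross_ratio n (P 1) (P 2) (P 3) (P k))"
    if "k \<in> {4..m}" for k using map_eq_on[OF L1, of k] that by (simp del: One_nat_def)
  have X2: "cross_ratio n (Q 1) (Q 3) (Q 2) (Q k) = cj \<mu> (cross_ratio n (P 1) (P 3) (P 2) (P k))"
    if "k \<in> {4..m}" for k using map_eq_on[OF L2, of k] that by (simp del: One_nat_def)
  have X3: "cross_ratio n (Q 1) (Q j) (Q 2) (Q k) = cj \<mu> (cross_ratio n (P 1) (P j) (P 2) (P k))"
    if "4 \<le> j" "j < k" "k \<le> m" for j k
  proof -
    have "(j,k) \<in> set (map (Pair j) [j+1..<m+1])" using that by (simp del: upt_Suc)
    moreover have "map (Pair j) [j+1..<m+1] \<in> set (map (\<lambda>k. map (Pair k) [k+1..<m+1]) [4..<m+1])"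
      using that by (simp del: upt_Suc)
    ultimately have "(j, k) \<in> set PS" by (simp only: PS_def set_concat) blast
    then show ?thesis using map_eq_on[OF L3, of "(j, k)"] by simp
  qed
  have n: "n \<ge> 1" and m: "m \<ge> 4" using assms by auto
  have P1: "hform n (P j) (P 1) = 1" if "j \<in> {2..m}" for j using TP(2) that by blast
  have Q1: "hform n (Q j) (Q 1) = 1" if "j \<in> {2..m}" for j using TQ(2) that by blast
  have P1': "hform n (P 1) (P j) = 1" if "j \<in> {2..m}" for j using P1[OF that] by (metis hform_conj qcnj_1)
  have Q1': "hform n (Q 1) (Q j) = 1" if "j \<in> {2..m}" for j using Q1[OF that] by (metis hform_conj qcnj_1)
  have i2: "(2::nat) \<in> {2..m}" and i3: "(3::nat) \<in> {2..m}" using m by auto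
  define xP where "xP = hform n (P 3) (P 2)"
  define xQ where "xQ = hform n (Q 3) (Q 2)"
  have axP: "qabs xP = 1" and axQ: "qabs xQ = 1" using TP(3) TQ(3) xP_def xQ_def by auto
  have AP: "A23 n P = arccos (- qre xP)" unfolding xP_def by (rule A23_eval[OF P1[OF i2] P1[OF i3] TP(3)])
  have AQ: "A23 n Q = arccos (- qre xQ)" unfolding xQ_def by (rule A23_eval[OF Q1[OF i2] Q1[OF i3] TQ(3)])
  have uP: "u0 n P = (if arccos (- qre xP) \<noteq> 0 then qscale (1 / qabs (qim xP)) (qim xP) else 0)"
    unfolding u0_def AP by (simp add: gram_def xP_def)
  have uQ: "u0 n Q = (if arccos (- qre xQ) \<noteq> 0 then qscale (1 / qabs (qim xQ)) (qim xQ) else 0)"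
    unfolding u0_def AQ by (simp add: gram_def xQ_def)
  have G32: "xQ = cj \<mu> xP"
    by (rule G23LEM[OF u axP axQ]) (use assms(12) AP AQ U0 uP uQ in simp_all)
  have xP0: "xP \<noteq> 0" using axP by (auto simp: qabs_def)
  have C2: "hform n (Q k) (Q 2) = cj \<mu> (hform n (P k) (P 2))" if k: "k \<in> {3..m}" for k
  proof (cases "k = 3")
    case True then show ?thesis using G32 xP_def xQ_def by simp
  next
    case False
    then have k4: "k \<in> {4..m}" and k2: "k \<in> {2..m}" using k by auto
    show ?thesis
      by (rule RECOVER[OF u xP0 G32 X1[OF k4]])
        (simp_all add: cr_eval P1[OF i3] P1[OF k2] Q1[OF i3] Q1[OF k2] xP_def xQ_def del: One_nat_def)
  qed
  have C3: "hform n (Q k) (Q 3) = cj \<mu> (hform n (P k) (P 3))" if k4: "k \<in> {4..m}" for k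
  proof -
    have k2: "k \<in> {2..m}" using k4 by auto
    have g: "hform n (P 2) (P 3) = qcnj xP" "hform n (Q 2) (Q 3) = qcnj xQ"
      unfolding xP_def xQ_def by (metis hform_conj)+
    have ga: "qcnj xQ = cj \<mu> (qcnj xP)" using G32 by (simp add: cj_qcnj)
    show ?thesis
      by (rule RECOVER[OF u _ ga X2[OF k4]])
        (simp_all add: xP0 cr_eval P1[OF i2] P1[OF k2] Q1[OF i2] Q1[OF k2] g del: One_nat_def)
  qed
  have Cj: "hform n (Q k) (Q j) = cj \<mu> (hform n (P k) (P j))" if jk: "4 \<le> j" "j < k" "k \<le> m" for j k
  proof -
    have k2: "k \<in> {2..m}" and j3: "j \<in> {3..m}" and j4: "j \<in> {4..m}" using jk by auto
    have ga0: "hform n (P 2) (P j) \<noteq> 0" using TP(4) j4 by blast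
    have ga: "hform n (Q 2) (Q j) = cj \<mu> (hform n (P 2) (P j))"
      using C2[OF j3] by (metis hform_conj cj_qcnj)
    show ?thesis
      by (rule RECOVER[OF u ga0 ga X3[OF jk]])
        (simp_all add: cr_eval P1[OF i2] P1[OF k2] Q1[OF i2] Q1[OF k2] del: One_nat_def)
  qed
  have LOW: "hform n (Q k) (Q j) = cj \<mu> (hform n (P k) (P j))"
    if H: "j \<in> {1..m}" "k \<in> {1..m}" "j < k" for j k
  proof -
    consider "j = 1" | "j = 2" | "j = 3" | "j \<ge> 4" using H by force
    then show ?thesis
    proof cases
      case 1
      then have "k \<in> {2..m}" using that by auto
      then show ?thesis using 1 P1 Q1 cj_1[OF u] by simp
    next
      case 2 then show ?thesis using C2[of k] that by simp
    next
      case 3 then show ?thesis using C3[of k] that by simp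
    next
      case 4 then show ?thesis using Cj[of j k] that by simp
    qed
  qed
  have GR: "hform n (Q i) (Q j) = cj \<mu> (hform n (P i) (P j))" if "i \<in> {1..m}" "j \<in> {1..m}" for i j
  proof -
    consider "i = j" | "j < i" | "i < j" by force
    then show ?thesis
    proof cases
      case 1 then show ?thesis using TP(1) TQ(1) that by (simp add: cj_def)
    next
      case 2 then show ?thesis using LOW that by blast
    next
      case 3
      then have "hform n (Q j) (Q i) = cj \<mu> (hform n (P j) (P i))" using LOW that by blast
      then show ?thesis by (metis hform_conj cj_qcnj)
    qed
  qed
  define Q' where "Q' = (\<lambda>i k. Q i k * \<mu>)"
  have u1: "\<mu> * qcnj \<mu> = 1" and u2: "qcnj \<mu> * \<mu> = 1" using unit_cnj[OF u] by auto
  have G': "\<forall>i\<in>{1..m}. \<forall>j\<in>{1..m}. hform n (P i) (P j) = hform n (Q' i) (Q' j)"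
  proof (intro ballI)
    fix i j assume "i \<in> {1..m}" "j \<in> {1..m}"
    then have "hform n (Q' i) (Q' j) = qcnj \<mu> * (\<mu> * hform n (P i) (P j) * qcnj \<mu> * \<mu>)"
      unfolding Q'_def by (simp add: hform_scale_left hform_scale_right GR cj_def mult.assoc)
    also have "\<dots> = (qcnj \<mu> * \<mu>) * hform n (P i) (P j) * (qcnj \<mu> * \<mu>)" by (simp add: mult.assoc)
    finally show "hform n (P i) (P j) = hform n (Q' i) (Q' j)" using u2 by simp
  qed
  have Pq: "\<forall>i\<in>{1..m}. P i \<in> qvecs n" and Pn: "\<forall>i\<in>{1..m}. hform n (P i) (P i) = 0" using TP(1) by auto
  have Q'q: "\<forall>i\<in>{1..m}. Q' i \<in> qvecs n" using TQ(1) by (auto simp: Q'_def qvecs_def)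
  obtain A where A: "A \<in> Sp_n1 n" "\<forall>i\<in>{1..m}. mv n A (P i) = Q' i"
    using WITT[OF n _ Pq Q'q Pn G'] TP(2) m by auto
  have mu0: "\<mu> \<noteq> 0" using u by (auto simp: qabs_def)
  have "\<forall>i\<in>{1..m}. mv n A ` p i = q i"
  proof
    fix i assume i: "i \<in> {1..m}"
    have "mv n A ` p i = qline (mv n A (P i))" using TP(1) i mv_qline by simp
    also have "\<dots> = qline (Q i)" using A(2) i qline_scale[OF mu0] by (simp add: Q'_def)
    also have "\<dots> = q i" using TQ(1) i by simp
    finally show "mv n A ` p i = q i" .
  qed
  then show ?thesis unfolding PSp_congruent_def using A(1) by blast
qed

end
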